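(* Let $\beta\in[1/2,1)$ and $0<\omega<\delta<1$ be fixed constants with $\omega/(1-\beta)<\delta$. Under the alternative, $\theta=\mathbf{1}_n$, $N=n^{1-\beta}$, $a=n^{-\omega}$, $c=n^{-\delta}$, $b=(c(n-N)-aN)/(n-2N)$, and the memberships are random: $X_i$ i.i.d. $\mathrm{Bernoulli}(N/n)$, with $\mathbb{P}(A_{ij}=1)=a$ if $X_i=X_j=1$, $c$ if $X_i=X_j=0$, $b$ otherwise (independently over $i<j$ given $X$). Under the null, $A$ is an Erdős–Rényi graph with edge probability $\alpha=a(N/n)+b(1-N/n)$. Let $v,e$ be fixed positive integers with $e\le v(v-1)/2$ and $\omega/(1-\beta)<v/e<\delta$. Then the economic scan test with parameters $(v,e)$ has type-I plus type-II error tending to $0$ as $n\to\infty$.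
   Context: $A$ is the symmetric zero-diagonal adjacency matrix. Economic scan statistic: $\phi^{(v)}_{EST}=\max_{S\subset\{1,\dots,n\},\,|S|\le v}\#\{\{i,j\}\subset S: i\ne j,\ A_{ij}=1\}$ (the maximum number of edges induced on a set of at most $v$ nodes); the EST rejects the null iff $\phi^{(v)}_{EST}\ge e$. *)

theory Defs
  imports "HOL-Probability.Probability"
begin

text \<open>Vertices are 0,...,n-1. A random graph is a random function on the
  index pairs (i,j) with i<j<n; the symmetric zero-diagonal adjacency matrix
  is obtained by symmetrisation.\<close>

definition pairs :: "nat \<Rightarrow> (nat \<times> nat) set" where
  "pairs n = {(i, j). i < j \<and> j < n}"

definition adj :: "(nat \<times> nat \<Rightarrow> bool) \<Rightarrow> nat \<Rightarrow> nat \<Rightarrow> bool" where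
  "adj E i j = (if i < j then E (i, j) else if j < i then E (j, i) else False)"

definition est_stat :: "nat \<Rightarrow> nat \<Rightarrow> (nat \<Rightarrow> nat \<Rightarrow> bool) \<Rightarrow> nat" where
  "est_stat n v A = Max {card {{i, j} | i j. i \<in> S \<and> j \<in> S \<and> i \<noteq> j \<and> A i j} | S.
                          S \<subseteq> {..<n} \<and> card S \<le> v}"

definition est_rejects :: "nat \<Rightarrow> nat \<Rightarrow> nat \<Rightarrow> (nat \<Rightarrow> nat \<Rightarrow> bool) \<Rightarrow> bool" where
  "est_rejects n v e A \<longleftrightarrow> est_stat n v A \<ge> e"

definition Npar :: "real \<Rightarrow> nat \<Rightarrow> real" where
  "Npar \<beta> n = real n powr (1 - \<beta>)"
definition apar :: "real \<Rightarrow> nat \<Rightarrow> real" where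
  "apar \<omega> n = real n powr (- \<omega>)"
definition cpar :: "real \<Rightarrow> nat \<Rightarrow> real" where
  "cpar \<delta> n = real n powr (- \<delta>)"
definition bpar :: "real \<Rightarrow> real \<Rightarrow> real \<Rightarrow> nat \<Rightarrow> real" where
  "bpar \<beta> \<omega> \<delta> n = (cpar \<delta> n * (real n - Npar \<beta> n) - apar \<omega> n * Npar \<beta> n)
                      / (real n - 2 * Npar \<beta> n)"
definition alphapar :: "real \<Rightarrow> real \<Rightarrow> real \<Rightarrow> nat \<Rightarrow> real" where
  "alphapar \<beta> \<omega> \<delta> n = apar \<omega> n * (Npar \<beta> n / real n)
                         + bpar \<beta> \<omega> \<delta> n * (1 - Npar \<beta> n / real n)"

definition null_graph :: "real \<Rightarrow> real \<Rightarrow> real \<Rightarrow> nat \<Rightarrow> (nat \<times> nat \<Rightarrow> bool) pmf" where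
  "null_graph \<beta> \<omega> \<delta> n = Pi_pmf (pairs n) False (\<lambda>_. bernoulli_pmf (alphapar \<beta> \<omega> \<delta> n))"

text \<open>Alternative model (theta = all-ones): i.i.d. Bernoulli(N/n) memberships,
  then independent edges with probabilities a / c / b.\<close>
definition edge_prob :: "real \<Rightarrow> real \<Rightarrow> real \<Rightarrow> nat \<Rightarrow> (nat \<Rightarrow> bool) \<Rightarrow> nat \<Rightarrow> nat \<Rightarrow> real" where
  "edge_prob \<beta> \<omega> \<delta> n X i j =
     (if X i \<and> X j then apar \<omega> n
      else if \<not> X i \<and> \<not> X j then cpar \<delta> n
      else bpar \<beta> \<omega> \<delta> n)"

definition alt_graph :: "real \<Rightarrow> real \<Rightarrow> real \<Rightarrow> nat \<Rightarrow> (nat \<times> nat \<Rightarrow> bool) pmf" where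
  "alt_graph \<beta> \<omega> \<delta> n =
     do { X \<leftarrow> Pi_pmf {..<n} False (\<lambda>_. bernoulli_pmf (Npar \<beta> n / real n));
          Pi_pmf (pairs n) False (\<lambda>(i, j). bernoulli_pmf (edge_prob \<beta> \<omega> \<delta> n X i j)) }"

definition typeI_err :: "real \<Rightarrow> real \<Rightarrow> real \<Rightarrow> nat \<Rightarrow> nat \<Rightarrow> nat \<Rightarrow> real" where
  "typeI_err \<beta> \<omega> \<delta> v e n =
     measure_pmf.prob (null_graph \<beta> \<omega> \<delta> n) {E. est_rejects n v e (adj E)}"

definition typeII_err :: "real \<Rightarrow> real \<Rightarrow> real \<Rightarrow> nat \<Rightarrow> nat \<Rightarrow> nat \<Rightarrow> real" where
  "typeII_err \<beta> \<omega> \<delta> v e n =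
     measure_pmf.prob (alt_graph \<beta> \<omega> \<delta> n) {E. \<not> est_rejects n v e (adj E)}"

end

theory Submission
  imports Defs
begin


lemma card_lt_pairs:
  fixes U :: "nat set" assumes "finite U"
  shows "2 * card {(x,y). x \<in> U \<and> y \<in> U \<and> x < y} = card U * (card U - 1)"
proof -
  let ?L = "{(x,y). x \<in> U \<and> y \<in> U \<and> x < y}"
  let ?G = "{(x,y). x \<in> U \<and> y \<in> U \<and> y < x}"
  let ?D = "(\<lambda>x. (x,x)) ` U"
  have fL: "finite ?L" by (rule finite_subset[of _ "U \<times> U"]) (auto simp: assms)
  have fG: "finite ?G" by (rule finite_subset[of _ "U \<times> U"]) (auto simp: assms)
  have "?G = (\<lambda>(x,y). (y,x)) ` ?L" by (auto simp: image_iff)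
  hence cG: "card ?G = card ?L" by (simp add: card_image inj_on_def)
  have eq: "U \<times> U - ?D = ?L \<union> ?G" by auto
  have "card (U \<times> U - ?D) = card U * card U - card U"
    by (subst card_Diff_subset) (auto simp: assms card_image inj_on_def card_cartesian_product)
  moreover have "card (?L \<union> ?G) = card ?L + card ?G"
    by (rule card_Un_disjoint) (use fL fG in auto)
  ultimately show ?thesis using eq cG by (simp add: algebra_simps diff_mult_distrib2)
qed

definition balanced :: "(nat \<times> nat) set \<Rightarrow> nat \<Rightarrow> nat \<Rightarrow> bool" where
  "balanced T v e \<longleftrightarrow> T \<subseteq> {(x,y). x < y \<and> y < v} \<and> card T = e \<and>
     (\<forall>U \<subseteq> {..<v}. card {p \<in> T. fst p \<in> U \<and> snd p \<in> U} * v \<le> e * card U)"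

lemma balanced_A:
  assumes "v * (v - 1) div 2 \<le> e + v div 2" "e \<le> v * (v - 1) div 2"
  shows "\<exists>T. balanced T v e"
proof -
  define m where "m = v * (v - 1) div 2 - e"
  define All where "All = {(x,y). x \<in> {..<v} \<and> y \<in> {..<v} \<and> x < y}"
  define M where "M = (\<lambda>i. (2*i, 2*i+1)) ` {..<m}"
  define T where "T = All - M"
  have m2: "2 * m \<le> v" using assms unfolding m_def by linarith
  have cAll2: "2 * card All = v * (v - 1)" unfolding All_def using card_lt_pairs[of "{..<v}"] by simp
  have ev: "even (v * (v - 1))" by (cases "even v") auto
  have cAll: "card All = v * (v - 1) div 2" using cAll2 by simp
  have MA: "M \<subseteq> All" using m2 unfolding M_def All_def by auto
  have cM: "card M = m" unfolding M_def by (simp add: card_image inj_on_def)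
  have fA: "finite All" unfolding All_def by (rule finite_subset[of _ "{..<v} \<times> {..<v}"]) auto
  have cT: "card T = e" unfolding T_def using MA cM cAll assms fA
    by (simp add: card_Diff_subset finite_subset m_def)
  have sub: "T \<subseteq> {(x,y). x < y \<and> y < v}" unfolding T_def All_def by auto
  have fT: "finite T" unfolding T_def using fA by simp
  have bal: "card {p \<in> T. fst p \<in> U \<and> snd p \<in> U} * v \<le> e * card U" if U: "U \<subseteq> {..<v}" for U
  proof (cases "U = {..<v}")
    case True
    hence "{p \<in> T. fst p \<in> U \<and> snd p \<in> U} = T" using sub by auto
    thus ?thesis using cT True by simp
  next
    case False
    have fU: "finite U" using U finite_subset by blast
    have "card U < v" using U False by (metis card_lessThan card_mono finite_lessThan psubsetI psubset_card_mono)
    define u where "u = card U"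
    have "{p \<in> T. fst p \<in> U \<and> snd p \<in> U} \<subseteq> {(x,y). x \<in> U \<and> y \<in> U \<and> x < y}"
      using sub by auto
    hence c1: "card {p \<in> T. fst p \<in> U \<and> snd p \<in> U} \<le> card {(x,y). x \<in> U \<and> y \<in> U \<and> x < y}"
      by (rule card_mono[rotated]) (rule finite_subset[of _ "U \<times> U"], auto simp: fU)
    have c2: "2 * card {(x,y). x \<in> U \<and> y \<in> U \<and> x < y} = u * (u - 1)"
      using card_lt_pairs[OF fU] u_def by simp
    have "2 * e \<ge> v * (v - 2)"
    proof -
      have "2 * (v * (v - 1) div 2) = v * (v - 1)" using ev by simp
      moreover have "v * (v - 1) = v * (v - 2) + v" if "v \<ge> 2" using that
        by (metis One_nat_def Suc_diff_Suc add.commute diff_Suc_1 le_add_diff_inverse2 less_eq_Suc_le mult_Suc_right nat_less_le numeral_2_eq_2 zero_less_diff)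
      moreover have "2 * (v div 2) \<le> v" by simp
      ultimately show ?thesis using assms(1)
      proof (cases "v \<ge> 2")
        case False thus ?thesis by simp
      qed linarith
    qed
    have "u - 1 \<le> v - 2" using \<open>card U < v\<close> u_def by linarith
    hence "u * (u - 1) * v \<le> u * (v - 2) * v" by (intro mult_le_mono) auto
    also have "\<dots> = u * (v * (v - 2))" by (simp add: algebra_simps)
    also have "\<dots> \<le> u * (2 * e)" using \<open>2 * e \<ge> v * (v - 2)\<close> by simp
    finally have "2 * card {(x,y). x \<in> U \<and> y \<in> U \<and> x < y} * v \<le> 2 * (e * u)" using c2 by (simp add: algebra_simps)
    hence "card {(x,y). x \<in> U \<and> y \<in> U \<and> x < y} * v \<le> e * u" by simp
    thus ?thesis using c1 u_def by (meson le_trans mult_le_mono1)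
  qed
  show ?thesis using sub cT bal unfolding balanced_def by blast
qed



lemma card_increments:
  fixes f :: "nat \<Rightarrow> nat"
  assumes mono: "\<And>x. f x \<le> f (Suc x)" and step: "\<And>x. f (Suc x) \<le> Suc (f x)"
  shows "card {x. x < n \<and> f x < f (Suc x)} = f n - f 0"
proof (induction n)
  case 0 then show ?case by simp
next
  case (Suc n)
  have mn: "f 0 \<le> f n" by (induction n) (auto intro: le_trans[OF _ mono])
  show ?case
  proof (cases "f n < f (Suc n)")
    case True
    hence "{x. x < Suc n \<and> f x < f (Suc x)} = insert n {x. x < n \<and> f x < f (Suc x)}" by auto
    hence "card {x. x < Suc n \<and> f x < f (Suc x)} = Suc (card {x. x < n \<and> f x < f (Suc x)})" by simp
    then show ?thesis using Suc True step[of n] mn by linarith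
  next
    case False
    hence "{x. x < Suc n \<and> f x < f (Suc x)} = {x. x < n \<and> f x < f (Suc x)}" using less_Suc_eq by auto
    then show ?thesis using Suc False mono[of n] by simp
  qed
qed

locale circ =
  fixes v k r :: nat
  assumes k1: "1 \<le> k" and kv: "2 * k + 2 < v" and rv: "r < v"
begin

definition nx :: "nat \<Rightarrow> nat \<Rightarrow> nat" where
  "nx d x = (if x + d < v then x + d else x + d - v)"

definition R :: "nat set" where
  "R = {x. x < v \<and> x * r div v < Suc x * r div v}"

definition P :: "(nat \<times> nat) set" where
  "P = {(x,d). x < v \<and> 1 \<le> d \<and> d \<le> k} \<union> {(x,d). x \<in> R \<and> d = Suc k}"

definition g :: "nat \<times> nat \<Rightarrow> nat \<times> nat" where
  "g p = (min (fst p) (nx (snd p) (fst p)), max (fst p) (nx (snd p) (fst p)))"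

lemma card_R: "card R = r"
proof -
  have "card R = card {x. x < v \<and> (\<lambda>x. x * r div v) x < (\<lambda>x. x * r div v) (Suc x)}"
    unfolding R_def by simp
  also have "\<dots> = v * r div v - 0 * r div v"
  proof (rule card_increments)
    fix x show "x * r div v \<le> Suc x * r div v" by (simp add: div_le_mono)
    have "Suc x * r div v \<le> (x * r + v) div v" by (rule div_le_mono) (use rv in simp)
    also have "\<dots> = Suc (x * r div v)" using rv by simp
    finally show "Suc x * r div v \<le> Suc (x * r div v)" .
  qed
  finally show ?thesis using rv by simp
qed

lemma R_sub: "R \<subseteq> {..<v}" unfolding R_def by auto

lemma nx_lt: "x < v \<Longrightarrow> d < v \<Longrightarrow> nx d x < v" unfolding nx_def by auto

lemma P_bound: "p \<in> P \<Longrightarrow> fst p < v \<and> 1 \<le> snd p \<and> snd p \<le> Suc k"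
  unfolding P_def R_def by auto

lemma g_pairs: "g ` P \<subseteq> {(x,y). x < y \<and> y < v}"
proof
  fix q assume "q \<in> g ` P"
  then obtain x d where p: "(x,d) \<in> P" and q: "q = g (x,d)" by auto
  have b: "x < v" "1 \<le> d" "d \<le> Suc k" using P_bound[OF p] by auto
  hence "nx d x \<noteq> x" "nx d x < v" using kv unfolding nx_def by auto
  thus "q \<in> {(x,y). x < y \<and> y < v}" using q b unfolding g_def by auto
qed

lemma g_inj: "inj_on g P"
proof (rule inj_onI)
  fix p p' assume p: "p \<in> P" and p': "p' \<in> P" and eq: "g p = g p'"
  obtain x d where pe: "p = (x,d)" by (cases p)
  obtain x' d' where pe': "p' = (x',d')" by (cases p')
  have b: "x < v" "1 \<le> d" "d \<le> Suc k" using P_bound[OF p] pe by auto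
  have b': "x' < v" "1 \<le> d'" "d' \<le> Suc k" using P_bound[OF p'] pe' by auto
  have e1: "min x (nx d x) = min x' (nx d' x')" and e2: "max x (nx d x) = max x' (nx d' x')"
    using eq pe pe' unfolding g_def by auto
  have "(x = x' \<and> nx d x = nx d' x') \<or> (x = nx d' x' \<and> nx d x = x')"
    using e1 e2 by (auto simp: min_def max_def split: if_splits)
  thus "p = p'"
  proof
    assume "x = x' \<and> nx d x = nx d' x'"
    hence "d = d'" using b b' kv unfolding nx_def by (auto split: if_splits)
    thus ?thesis using pe pe' \<open>x = x' \<and> _\<close> by simp
  next
    assume "x = nx d' x' \<and> nx d x = x'"
    hence False using b b' kv unfolding nx_def by (auto split: if_splits)
    thus ?thesis ..
  qed
qed

lemma card_P: "card P = k * v + r"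
proof -
  have A: "{(x,d). x < v \<and> 1 \<le> d \<and> d \<le> k} = {..<v} \<times> {1..k}" by auto
  have B: "{(x,d). x \<in> R \<and> d = Suc k} = R \<times> {Suc k}" by auto
  have fR: "finite R" using R_sub finite_subset by blast
  have "card P = card ({..<v} \<times> {1..k}) + card (R \<times> {Suc k})"
    unfolding P_def A B by (rule card_Un_disjoint) (auto simp: fR)
  thus ?thesis by (simp add: card_cartesian_product card_R)
qed


lemma step_div: "Suc x * r div v \<le> Suc (x * r div v)"
proof -
  have "Suc x * r div v \<le> (x * r + v) div v" by (rule div_le_mono) (use rv in simp)
  also have "\<dots> = Suc (x * r div v)" using rv by simp
  finally show ?thesis .
qed

definition w :: "nat \<Rightarrow> real" where
  "w x = 1 + real (Suc x * r div v) - real (Suc x * r) / real v"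

definition pr :: "nat \<Rightarrow> nat" where
  "pr x = (if x = 0 then v - 1 else x - 1)"

lemma div_bounds:
  fixes a :: nat
  shows "real (a div v) \<le> real a / real v" "real a / real v < real (a div v) + 1"
proof -
  have vpos: "real v > 0" using kv by simp
  have a: "real a = real v * real (a div v) + real (a mod v)"
    by (metis div_mult_mod_eq of_nat_add of_nat_mult mult.commute)
  have m: "real (a mod v) < real v" using kv by simp
  show "real (a div v) \<le> real a / real v" using a vpos by (simp add: field_simps)
  show "real a / real v < real (a div v) + 1" using a vpos m by (simp add: field_simps)
qed

lemma w_bounds: "0 \<le> w x" "w x \<le> 1"
  using div_bounds[of "Suc x * r"] unfolding w_def by auto

lemma w_diff:
  assumes "x < v"
  shows "of_bool (x \<in> R) - real r / real v = w x - w (pr x)"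
proof (cases "x = 0")
  case True
  have vpos: "real v > 0" using kv by simp
  have "0 \<notin> R" unfolding R_def using rv by simp
  moreover have "w 0 = 1 - real r / real v" unfolding w_def using rv by simp
  moreover have "w (v - 1) = 1" unfolding w_def using kv vpos by simp
  ultimately show ?thesis using True unfolding pr_def by simp
next
  case False
  then obtain y where y: "x = Suc y" by (cases x) auto
  have "of_bool (x \<in> R) = real (Suc x * r div v) - real (x * r div v)"
    using step_div[of x] assms div_le_mono[of "x*r" "Suc x * r" v] unfolding R_def
    by (auto simp: of_nat_diff)
  moreover have "real (Suc x * r) / real v - real (x * r) / real v = real r / real v"
    by (simp add: diff_divide_distrib[symmetric] algebra_simps)
  moreover have "pr x = y" "Suc y = x" using y unfolding pr_def by auto
  ultimately show ?thesis unfolding w_def by (simp only: \<open>pr x = y\<close> \<open>Suc y = x\<close>)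
qed

lemma pr_nx: "x < v \<Longrightarrow> pr (nx 1 x) = x"
  unfolding pr_def nx_def by auto

lemma pr_inj: "inj_on pr {..<v}"
  unfolding pr_def inj_on_def using kv by auto

lemma key_ineq:
  assumes U: "U \<subseteq> {..<v}"
  shows "real (card (U \<inter> R)) - real r * real (card U) / real v \<le> real (card {x \<in> U. nx 1 x \<notin> U})"
proof -
  have fU: "finite U" using U finite_subset by blast
  have "real (card (U \<inter> R)) - real r * real (card U) / real v = (\<Sum>x\<in>U. of_bool (x \<in> R) - real r / real v)"
    using fU by (simp add: sum_subtractf Int_def)
  also have "\<dots> = (\<Sum>x\<in>U. w x - w (pr x))"
    using U by (intro sum.cong refl w_diff) auto
  also have "\<dots> = sum w U - sum w (pr ` U)"
  proof -
    have "sum w (pr ` U) = sum (w \<circ> pr) U" by (rule sum.reindex[OF inj_on_subset[OF pr_inj U]])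
    thus ?thesis by (simp add: sum_subtractf)
  qed
  also have "\<dots> \<le> sum w (U - pr ` U)"
  proof -
    have f2: "finite (pr ` U)" using fU by simp
    have "sum w U = sum w (U - pr ` U) + sum w (U \<inter> pr ` U)"
      using sum.Int_Diff[OF fU, of w "pr ` U"] by simp
    moreover have "sum w (U \<inter> pr ` U) \<le> sum w (pr ` U)"
      by (rule sum_mono2) (use f2 w_bounds in auto)
    ultimately show ?thesis by simp
  qed
  also have "\<dots> \<le> sum (\<lambda>_. 1) (U - pr ` U)"
    by (rule sum_mono) (use w_bounds in auto)
  also have "\<dots> = real (card (U - pr ` U))" by simp
  also have "\<dots> \<le> real (card {x \<in> U. nx 1 x \<notin> U})"
  proof -
    have "U - pr ` U \<subseteq> {x \<in> U. nx 1 x \<notin> U}"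
    proof
      fix x assume x: "x \<in> U - pr ` U"
      hence "x < v" using U by auto
      show "x \<in> {x \<in> U. nx 1 x \<notin> U}"
      proof (rule ccontr)
        assume "x \<notin> {x \<in> U. nx 1 x \<notin> U}"
        hence "nx 1 x \<in> U" using x by auto
        hence "pr (nx 1 x) \<in> pr ` U" by auto
        thus False using pr_nx[OF \<open>x < v\<close>] x by auto
      qed
    qed
    thus ?thesis by (simp add: card_mono fU)
  qed
  finally show ?thesis .
qed


lemma balanced_circ: "balanced (g ` P) v (k * v + r)"
proof -
  have cT: "card (g ` P) = k * v + r" using card_image[OF g_inj] card_P by simp
  have bal: "card {q \<in> g ` P. fst q \<in> U \<and> snd q \<in> U} * v \<le> (k * v + r) * card U"
    if U: "U \<subseteq> {..<v}" for U
  proof -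
    have fU: "finite U" using U finite_subset by blast
    define Q where "Q = {p \<in> P. fst p \<in> U \<and> nx (snd p) (fst p) \<in> U}"
    have "{q \<in> g ` P. fst q \<in> U \<and> snd q \<in> U} \<subseteq> g ` Q"
      unfolding Q_def g_def by (auto simp: min_def max_def split: if_splits)
    have fQ: "finite Q"
    proof -
      have "Q \<subseteq> {..<v} \<times> {..Suc k}" using P_bound unfolding Q_def by fastforce
      thus ?thesis by (rule finite_subset) simp
    qed
    have c1: "card {q \<in> g ` P. fst q \<in> U \<and> snd q \<in> U} \<le> card Q"
      using card_mono[OF finite_imageI[OF fQ] \<open>{q \<in> g ` P. fst q \<in> U \<and> snd q \<in> U} \<subseteq> g ` Q\<close>] card_image_le[OF fQ, of g] by linarith
    define A1 where "A1 = U \<times> {2..k}"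
    define A2 where "A2 = {x \<in> U. nx 1 x \<in> U} \<times> {1::nat}"
    define A3 where "A3 = (U \<inter> R) \<times> {Suc k}"
    have "Q \<subseteq> A1 \<union> A2 \<union> A3"
    proof
      fix p assume p: "p \<in> Q"
      obtain x d where pe: "p = (x,d)" by (cases p)
      have "p \<in> P" using p Q_def by auto
      hence "(x < v \<and> 1 \<le> d \<and> d \<le> k) \<or> (x \<in> R \<and> d = Suc k)" using pe P_def by auto
      thus "p \<in> A1 \<union> A2 \<union> A3" using p pe unfolding Q_def A1_def A2_def A3_def
        by (cases "d = 1") auto
    qed
    hence "card Q \<le> card (A1 \<union> A2 \<union> A3)"
      by (rule card_mono[rotated]) (auto simp: A1_def A2_def A3_def fU)
    also have "\<dots> \<le> card A1 + card A2 + card A3" using card_Un_le[of "A1 \<union> A2" A3] card_Un_le[of A1 A2] by linarith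
    also have "\<dots> = card U * (k - 1) + card {x \<in> U. nx 1 x \<in> U} + card (U \<inter> R)"
      unfolding A1_def A2_def A3_def by (simp add: card_cartesian_product)
    finally have cQ: "card Q \<le> card U * (k - 1) + card {x \<in> U. nx 1 x \<in> U} + card (U \<inter> R)" .
    have split: "card {x \<in> U. nx 1 x \<in> U} + card {x \<in> U. nx 1 x \<notin> U} = card U"
    proof -
      have "card U = card ({x \<in> U. nx 1 x \<in> U} \<union> {x \<in> U. nx 1 x \<notin> U})" by (rule arg_cong[of _ _ card]) auto
      also have "\<dots> = card {x \<in> U. nx 1 x \<in> U} + card {x \<in> U. nx 1 x \<notin> U}"
        by (rule card_Un_disjoint) (auto simp: fU)
      finally show ?thesis by simp
    qed
    have key: "real (card (U \<inter> R)) - real r * real (card U) / real v \<le> real (card {x \<in> U. nx 1 x \<notin> U})"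
      by (rule key_ineq[OF U])
    have vpos: "real v > 0" using kv by simp
    have "real (card {q \<in> g ` P. fst q \<in> U \<and> snd q \<in> U}) \<le> real (card U) * (real k - 1) + real (card U) + real r * real (card U) / real v"
    proof -
      have a1: "real (card {q \<in> g ` P. fst q \<in> U \<and> snd q \<in> U}) \<le> real (card Q)" using c1 by simp
      have a2: "real (card Q) \<le> real (card U * (k - 1)) + real (card {x \<in> U. nx 1 x \<in> U}) + real (card (U \<inter> R))"
        using cQ by (simp only: of_nat_add[symmetric] of_nat_le_iff)
      have a3: "real (card U * (k - 1)) = real (card U) * (real k - 1)" using k1 by (simp add: of_nat_diff)
      have a4: "real (card {x \<in> U. nx 1 x \<in> U}) + real (card {x \<in> U. nx 1 x \<notin> U}) = real (card U)"
        using split by (simp only: of_nat_add[symmetric])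
      show ?thesis using a1 a2 a3 a4 key by linarith
    qed
    hence "real (card {q \<in> g ` P. fst q \<in> U \<and> snd q \<in> U}) * real v \<le> (real k * real v + real r) * real (card U)"
      using vpos by (simp add: field_simps)
    hence "real (card {q \<in> g ` P. fst q \<in> U \<and> snd q \<in> U} * v) \<le> real ((k * v + r) * card U)" by simp
    thus ?thesis by (simp only: of_nat_le_iff)
  qed
  show ?thesis unfolding balanced_def using g_pairs cT bal by blast
qed

end

lemma balanced_exists:
  assumes "v < e" "e \<le> v * (v - 1) div 2"
  shows "\<exists>T. balanced T v e"
proof (cases "v * (v - 1) div 2 \<le> e + v div 2")
  case True thus ?thesis using balanced_A assms by blast
next
  case False
  define k where "k = e div v"
  define r where "r = e mod v"
  have v0: "v > 0" using assms by (cases v) auto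
  have ek: "e = k * v + r" unfolding k_def r_def by simp
  have k1: "1 \<le> k" using div_le_mono[of v e v] assms v0 unfolding k_def by simp
  have ev: "2 * (v * (v - 1) div 2) = v * (v - 1)" by (cases "even v") auto
  have h2: "2 * (v div 2) + 1 \<ge> v" by linarith
  have "2 * e + 2 * (v div 2) < v * (v - 1)" using False ev by linarith
  hence "2 * k * v + v < v * (v - 1) + 1" using ek h2 by (simp add: algebra_simps)
  hence "2 * k * v + v < v * v - v + 1" by (simp add: algebra_simps diff_mult_distrib2)
  hence lt1: "(2 * k + 2) * v < v * v + 1" by (simp add: algebra_simps)
  have kv: "2 * k + 2 < v"
  proof (rule ccontr)
    assume "\<not> 2 * k + 2 < v"
    hence "v \<le> 2 * k + 2" by simp
    hence "v * v \<le> (2 * k + 2) * v" using mult_le_mono1[of v "2 * k + 2" v] by simp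
    hence "(2 * k + 2) * v = v * v" using lt1 by linarith
    hence "2 * k + 2 = v" using v0 by (metis mult_right_cancel not_less0)
    hence vk: "v = 2 * k + 2" by simp
    hence "v div 2 = k + 1" by simp
    hence "2 * e + 2 * (v div 2) \<ge> 2 * k * v + v" using ek vk by simp
    moreover have "v * (v - 1) = 2 * k * v + v" using vk by (simp add: algebra_simps)
    ultimately show False using \<open>2 * e + 2 * (v div 2) < v * (v - 1)\<close> by linarith
  qed
  interpret circ v k r using k1 kv unfolding r_def by unfold_locales (auto simp: v0)
  show ?thesis using balanced_circ ek by auto
qed



context begin
interpretation pmf_as_function .
lemma pmf_bern_True: "pmf (bernoulli_pmf p) True = min 1 (max 0 p)"
  by transfer simp
end

lemma integrable_pmf_bounded:
  fixes f :: "'a \<Rightarrow> real"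
  assumes "\<And>x. \<bar>f x\<bar> \<le> B"
  shows "integrable (measure_pmf M) f"
  by (rule measure_pmf.integrable_const_bound[where B=B]) (use assms in auto)

lemma measure_bind_pmf:
  "measure_pmf.prob (bind_pmf M N) A = (\<integral>x. measure_pmf.prob (N x) A \<partial>M)"
proof -
  have "ennreal (measure_pmf.prob (bind_pmf M N) A) = emeasure (bind_pmf M N) A"
    by (simp add: measure_pmf.emeasure_eq_measure)
  also have "\<dots> = (\<integral>\<^sup>+x. emeasure (N x) A \<partial>M)" by simp
  also have "\<dots> = (\<integral>\<^sup>+x. ennreal (measure_pmf.prob (N x) A) \<partial>M)"
    by (simp add: measure_pmf.emeasure_eq_measure)
  also have "\<dots> = ennreal (\<integral>x. measure_pmf.prob (N x) A \<partial>M)"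
    by (rule nn_integral_eq_integral) (auto intro!: integrable_pmf_bounded[where B=1])
  finally show ?thesis by (simp add: integral_nonneg_AE)
qed

lemma prob_Pi_true:
  assumes "finite A" "T \<subseteq> A"
  shows "measure_pmf.prob (Pi_pmf A dflt p) {f. \<forall>x\<in>T. f x} = (\<Prod>x\<in>T. pmf (p x) True)"
proof -
  define B where "B = (\<lambda>x. if x \<in> T then {True} else (UNIV :: bool set))"
  have "{f. \<forall>x\<in>T. f x} = Pi A B" using assms unfolding B_def Pi_def by auto
  hence "measure_pmf.prob (Pi_pmf A dflt p) {f. \<forall>x\<in>T. f x} = (\<Prod>x\<in>A. measure_pmf.prob (p x) (B x))"
    using measure_Pi_pmf_Pi[OF assms(1)] by simp
  also have "\<dots> = (\<Prod>x\<in>A. if x \<in> T then pmf (p x) True else 1)"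
    unfolding B_def by (intro prod.cong) (auto simp: measure_pmf_single)
  also have "\<dots> = (\<Prod>x\<in>T. pmf (p x) True)"
    using assms by (simp add: prod.If_cases Int_absorb1)
  finally show ?thesis .
qed

definition TS :: "nat set \<Rightarrow> (nat \<times> nat \<Rightarrow> bool) \<Rightarrow> (nat \<times> nat) set" where
  "TS S E = {(i,j). i \<in> S \<and> j \<in> S \<and> i < j \<and> E (i,j)}"

lemma finite_TS: "finite S \<Longrightarrow> finite (TS S E)"
  unfolding TS_def by (rule finite_subset[of _ "S \<times> S"]) auto

lemma D_eq: "{{i, j} | i j. i \<in> S \<and> j \<in> S \<and> i \<noteq> j \<and> adj E i j} = (\<lambda>(i,j). {i,j}) ` TS S E"
proof (intro equalityI subsetI)
  fix d assume "d \<in> {{i, j} | i j. i \<in> S \<and> j \<in> S \<and> i \<noteq> j \<and> adj E i j}"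
  then obtain i j where d: "d = {i,j}" "i \<in> S" "j \<in> S" "i \<noteq> j" "adj E i j" by blast
  show "d \<in> (\<lambda>(i,j). {i,j}) ` TS S E"
  proof (cases "i < j")
    case True thus ?thesis using d unfolding TS_def adj_def by (auto intro!: image_eqI[of _ _ "(i,j)"])
  next
    case False hence "j < i" using d by simp
    thus ?thesis using d unfolding TS_def adj_def by (auto intro!: image_eqI[of _ _ "(j,i)"])
  qed
next
  fix d assume "d \<in> (\<lambda>(i,j). {i,j}) ` TS S E"
  thus "d \<in> {{i, j} | i j. i \<in> S \<and> j \<in> S \<and> i \<noteq> j \<and> adj E i j}"
    unfolding TS_def adj_def by auto
qed

lemma inj_doubleton: "inj_on (\<lambda>(i::nat,j). {i,j}) {(i,j). i < j}"
proof (rule inj_onI)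
  fix p q :: "nat \<times> nat" assume "p \<in> {(i,j). i < j}" "q \<in> {(i,j). i < j}" "(\<lambda>(i,j). {i,j}) p = (\<lambda>(i,j). {i,j}) q"
  thus "p = q" by (cases p, cases q) (auto simp: doubleton_eq_iff)
qed

lemma card_D: "card {{i, j} | i j. i \<in> S \<and> j \<in> S \<and> i \<noteq> j \<and> adj E i j} = card (TS S E)"
  unfolding D_eq by (rule card_image, rule inj_on_subset[OF inj_doubleton]) (auto simp: TS_def)

lemma est_rejects_iff:
  "est_rejects n v e (adj E) \<longleftrightarrow> (\<exists>S. S \<subseteq> {..<n} \<and> card S \<le> v \<and> e \<le> card (TS S E))"
proof -
  define F where "F = {S. S \<subseteq> {..<n} \<and> card S \<le> v}"
  have C: "{card {{i, j} | i j. i \<in> S \<and> j \<in> S \<and> i \<noteq> j \<and> adj E i j} | S. S \<subseteq> {..<n} \<and> card S \<le> v}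
     = (\<lambda>S. card (TS S E)) ` F" unfolding F_def card_D by auto
  have fF: "finite F" unfolding F_def by (rule finite_subset[of _ "Pow {..<n}"]) auto
  have neF: "F \<noteq> {}" unfolding F_def by (auto intro!: exI[of _ "{}"])
  have "est_stat n v (adj E) = Max ((\<lambda>S. card (TS S E)) ` F)" unfolding est_stat_def C ..
  hence "est_rejects n v e (adj E) \<longleftrightarrow> (\<exists>S\<in>F. e \<le> card (TS S E))"
    unfolding est_rejects_def using fF neF by (simp add: Max_ge_iff)
  thus ?thesis unfolding F_def by auto
qed

lemma card_small_subsets:
  assumes "1 \<le> n"
  shows "card {S. S \<subseteq> {..<n::nat} \<and> card S \<le> v} \<le> (v + 1) * n ^ v"
proof -
  have eq: "{S. S \<subseteq> {..<n} \<and> card S \<le> v} = (\<Union>k\<in>{..v}. {S. S \<subseteq> {..<n} \<and> card S = k})" by auto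
  have "card (\<Union>k\<in>{..v}. {S. S \<subseteq> {..<n} \<and> card S = k}) \<le> (\<Sum>k\<in>{..v}. card {S. S \<subseteq> {..<n} \<and> card S = k})"
    by (rule card_UN_le) simp
  also have "\<dots> = (\<Sum>k\<in>{..v}. n choose k)" using n_subsets[of "{..<n}"] by simp
  also have "\<dots> \<le> (\<Sum>k\<in>{..v}. n ^ v)"
  proof (rule sum_mono)
    fix k assume k: "k \<in> {..v}"
    show "n choose k \<le> n ^ v"
    proof (cases "k \<le> n")
      case True
      hence "n choose k \<le> n ^ k" by (rule binomial_le_pow)
      also have "\<dots> \<le> n ^ v" using k assms by (intro power_increasing) auto
      finally show ?thesis .
    next
      case False thus ?thesis by (simp add: binomial_eq_0)
    qed
  qed
  also have "\<dots> = (v + 1) * n ^ v" by simp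
  finally show ?thesis using eq by simp
qed

lemma typeI_bound:
  assumes "1 \<le> n"
  shows "typeI_err \<beta> \<omega> \<delta> v e n \<le> real ((v + 1) * n ^ v * 2 ^ (v * v)) * (min 1 (max 0 (alphapar \<beta> \<omega> \<delta> n))) ^ e"
proof -
  define pa where "pa = min 1 (max 0 (alphapar \<beta> \<omega> \<delta> n))"
  define F where "F = {S. S \<subseteq> {..<n} \<and> card S \<le> v}"
  define TT where "TT = (\<lambda>S. {T. T \<subseteq> TS S (\<lambda>_. True) \<and> card T = e})"
  define I where "I = Sigma F TT"
  define M where "M = null_graph \<beta> \<omega> \<delta> n"
  have fF: "finite F" unfolding F_def by (rule finite_subset[of _ "Pow {..<n}"]) auto
  have fS: "S \<in> F \<Longrightarrow> finite S" for S unfolding F_def using finite_subset by blast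
  have fTT: "S \<in> F \<Longrightarrow> finite (TT S)" for S unfolding TT_def
    by (rule finite_subset[of _ "Pow (TS S (\<lambda>_. True))"]) (auto intro: finite_TS fS)
  have fI: "finite I" unfolding I_def using fF fTT by auto
  have sub: "{E. est_rejects n v e (adj E)} \<subseteq> (\<Union>i\<in>I. {E. \<forall>p\<in>snd i. E p})"
  proof
    fix E assume "E \<in> {E. est_rejects n v e (adj E)}"
    then obtain S where S: "S \<subseteq> {..<n}" "card S \<le> v" "e \<le> card (TS S E)"
      using est_rejects_iff by blast
    obtain T where T: "T \<subseteq> TS S E" "card T = e"
      using obtain_subset_with_card_n[OF S(3)] by metis
    have "(S, T) \<in> I" unfolding I_def F_def TT_def using S T by (auto simp: TS_def)
    moreover have "\<forall>p\<in>T. E p" using T(1) by (auto simp: TS_def)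
    ultimately show "E \<in> (\<Union>i\<in>I. {E. \<forall>p\<in>snd i. E p})" by force
  qed
  have "typeI_err \<beta> \<omega> \<delta> v e n = measure_pmf.prob M {E. est_rejects n v e (adj E)}"
    unfolding typeI_err_def M_def ..
  also have "\<dots> \<le> measure_pmf.prob M (\<Union>i\<in>I. {E. \<forall>p\<in>snd i. E p})"
    by (rule measure_pmf.finite_measure_mono[OF sub]) simp
  also have "\<dots> \<le> (\<Sum>i\<in>I. measure_pmf.prob M {E. \<forall>p\<in>snd i. E p})"
    by (rule measure_pmf.finite_measure_subadditive_finite[OF fI]) simp
  also have "\<dots> = (\<Sum>i\<in>I. pa ^ e)"
  proof (rule sum.cong[OF refl])
    fix i assume i: "i \<in> I"
    then obtain S T where iST: "i = (S,T)" "S \<in> F" "T \<in> TT S" unfolding I_def by auto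
    have Tp: "T \<subseteq> pairs n" using iST unfolding TT_def F_def TS_def pairs_def by auto
    have fp: "finite (pairs n)" unfolding pairs_def by (rule finite_subset[of _ "{..<n} \<times> {..<n}"]) auto
    have "measure_pmf.prob M {E. \<forall>p\<in>T. E p} = (\<Prod>p\<in>T. pmf (bernoulli_pmf (alphapar \<beta> \<omega> \<delta> n)) True)"
      unfolding M_def null_graph_def by (rule prob_Pi_true[OF fp Tp])
    also have "\<dots> = pa ^ card T" unfolding pa_def pmf_bern_True by simp
    finally show "measure_pmf.prob M {E. \<forall>p\<in>snd i. E p} = pa ^ e" using iST TT_def by simp
  qed
  also have "\<dots> = real (card I) * pa ^ e" by simp
  also have "\<dots> \<le> real ((v + 1) * n ^ v * 2 ^ (v * v)) * pa ^ e"
  proof (rule mult_right_mono)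
    show "0 \<le> pa ^ e" unfolding pa_def by simp
    have "card I = (\<Sum>S\<in>F. card (TT S))" unfolding I_def using fF fTT by (simp add: card_SigmaI)
    also have "\<dots> \<le> (\<Sum>S\<in>F. 2 ^ (v * v))"
    proof (rule sum_mono)
      fix S assume S: "S \<in> F"
      have "card (TT S) \<le> card (Pow (TS S (\<lambda>_. True)))"
        by (rule card_mono) (auto simp: TT_def intro: finite_TS fS[OF S])
      also have "\<dots> = 2 ^ card (TS S (\<lambda>_. True))" by (simp add: card_Pow finite_TS fS[OF S])
      also have "\<dots> \<le> 2 ^ (v * v)"
      proof (rule power_increasing)
        have "card (TS S (\<lambda>_. True)) \<le> card (S \<times> S)"
          by (rule card_mono) (auto simp: TS_def fS[OF S])
        also have "\<dots> = card S * card S" by (simp add: card_cartesian_product)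
        also have "\<dots> \<le> v * v" using S unfolding F_def by (simp add: mult_le_mono)
        finally show "card (TS S (\<lambda>_. True)) \<le> v * v" .
      qed simp
      finally show "card (TT S) \<le> 2 ^ (v * v)" .
    qed
    also have "\<dots> = card F * 2 ^ (v * v)" by simp
    also have "\<dots> \<le> (v + 1) * n ^ v * 2 ^ (v * v)"
      using card_small_subsets[OF assms, of v] unfolding F_def by simp
    finally show "real (card I) \<le> real ((v + 1) * n ^ v * 2 ^ (v * v))" by linarith
  qed
  finally show ?thesis unfolding pa_def .
qed

lemma second_moment:
  fixes M :: "'a pmf" and A :: "'i \<Rightarrow> 'a set"
  assumes fI: "finite I" and mu: "\<mu> = (\<Sum>i\<in>I. measure_pmf.prob M (A i))" and mpos: "\<mu> > 0"
  shows "measure_pmf.prob M {z. \<forall>i\<in>I. z \<notin> A i}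
          \<le> (\<Sum>i\<in>I. \<Sum>j\<in>I. measure_pmf.prob M (A i \<inter> A j)) / \<mu>^2 - 1"
proof -
  define Z where "Z = (\<lambda>z. \<Sum>i\<in>I. indicator (A i) z :: real)"
  define B where "B = {z. \<forall>i\<in>I. z \<notin> A i}"
  have intZ: "integrable M Z"
    by (rule integrable_pmf_bounded[where B="real (card I)"])
       (auto simp: Z_def intro!: order.trans[OF sum_abs] order.trans[OF sum_bounded_above[where K=1]])
  have intZ2: "integrable M (\<lambda>z. (Z z)^2)"
  proof (rule integrable_pmf_bounded[where B="real (card I)^2"])
    fix z
    have "\<bar>Z z\<bar> \<le> real (card I)" unfolding Z_def
      by (auto intro!: order.trans[OF sum_abs] order.trans[OF sum_bounded_above[where K=1]])
    hence "\<bar>Z z\<bar>^2 \<le> real (card I)^2" using power_mono[OF _ abs_ge_zero, of "Z z" "real (card I)" 2] by simp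
    thus "\<bar>(Z z)^2\<bar> \<le> real (card I)^2" by simp
  qed
  have pt: "indicator B z \<le> (Z z - \<mu>)^2 / \<mu>^2" for z
  proof (cases "z \<in> B")
    case True
    hence "Z z = 0" unfolding Z_def B_def by (auto intro!: sum.neutral)
    thus ?thesis using True mpos by simp
  next
    case False thus ?thesis by simp
  qed
  have EZ: "integral\<^sup>L M Z = \<mu>"
    unfolding Z_def mu by (simp add: integral_sum integrable_pmf_bounded[where B=1])
  have EZ2: "integral\<^sup>L M (\<lambda>z. (Z z)^2) = (\<Sum>i\<in>I. \<Sum>j\<in>I. measure_pmf.prob M (A i \<inter> A j))"
  proof -
    have "(\<lambda>z. (Z z)^2) = (\<lambda>z. \<Sum>i\<in>I. \<Sum>j\<in>I. indicator (A i \<inter> A j) z)"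
      unfolding Z_def power2_eq_square sum_product by (simp add: indicator_inter_arith)
    hence "integral\<^sup>L M (\<lambda>z. (Z z)^2) = (\<Sum>i\<in>I. \<Sum>j\<in>I. integral\<^sup>L M (indicator (A i \<inter> A j) :: 'a \<Rightarrow> real))"
      by (simp add: integral_sum integrable_pmf_bounded[where B=1])
    thus ?thesis by simp
  qed
  have "measure_pmf.prob M B = integral\<^sup>L M (indicator B :: 'a \<Rightarrow> real)" by simp
  also have "\<dots> \<le> integral\<^sup>L M (\<lambda>z. (Z z - \<mu>)^2 / \<mu>^2)"
  proof (rule integral_mono)
    show "integrable M (indicator B :: 'a \<Rightarrow> real)" by (rule integrable_pmf_bounded[where B=1]) auto
    have "(\<lambda>z. (Z z - \<mu>)^2 / \<mu>^2) = (\<lambda>z. ((Z z)^2 - 2 * \<mu> * Z z + \<mu>^2) / \<mu>^2)"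
      by (simp add: power2_diff algebra_simps)
    thus "integrable M (\<lambda>z. (Z z - \<mu>)^2 / \<mu>^2)" using intZ intZ2 by simp
  qed (use pt in auto)
  also have "\<dots> = (integral\<^sup>L M (\<lambda>z. (Z z)^2) - 2 * \<mu> * integral\<^sup>L M Z + \<mu>^2) / \<mu>^2"
  proof -
    have "(\<lambda>z. (Z z - \<mu>)^2 / \<mu>^2) = (\<lambda>z. ((Z z)^2 - 2 * \<mu> * Z z + \<mu>^2) / \<mu>^2)"
      by (simp add: power2_diff algebra_simps)
    hence "integral\<^sup>L M (\<lambda>z. (Z z - \<mu>)^2 / \<mu>^2) = integral\<^sup>L M (\<lambda>z. ((Z z)^2 - 2 * \<mu> * Z z + \<mu>^2)) / \<mu>^2"
      by simp
    also have "integral\<^sup>L M (\<lambda>z. ((Z z)^2 - 2 * \<mu> * Z z + \<mu>^2)) = integral\<^sup>L M (\<lambda>z. (Z z)^2) - 2 * \<mu> * integral\<^sup>L M Z + \<mu>^2"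
      using intZ intZ2 by (simp add: integral_diff integral_add)
    finally show ?thesis .
  qed
  also have "\<dots> = (\<Sum>i\<in>I. \<Sum>j\<in>I. measure_pmf.prob M (A i \<inter> A j)) / \<mu>^2 - 1"
    using mpos unfolding EZ EZ2 by (simp add: field_simps power2_eq_square)
  finally show ?thesis unfolding B_def .
qed

lemma joint_prob:
  fixes ep :: "(nat \<Rightarrow> bool) \<Rightarrow> nat \<Rightarrow> nat \<Rightarrow> real"
  assumes V: "V \<subseteq> {..<n}" and T: "T \<subseteq> pairs n" and TV: "\<And>i j. (i,j) \<in> T \<Longrightarrow> i \<in> V \<and> j \<in> V"
    and ep: "\<And>X i j. X i \<Longrightarrow> X j \<Longrightarrow> ep X i j = a"
    and a: "0 \<le> a" "a \<le> 1" and q: "0 \<le> q" "q \<le> 1"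
  shows "measure_pmf.prob
      (bind_pmf (Pi_pmf {..<n} False (\<lambda>_. bernoulli_pmf q))
         (\<lambda>X. map_pmf (\<lambda>E. (X, E)) (Pi_pmf (pairs n) False (\<lambda>(i,j). bernoulli_pmf (ep X i j)))))
      {z. (\<forall>y\<in>V. fst z y) \<and> (\<forall>p\<in>T. snd z p)} = q ^ card V * a ^ card T"
proof -
  define PX where "PX = Pi_pmf {..<n} False (\<lambda>_. bernoulli_pmf q)"
  define PE where "PE = (\<lambda>X. Pi_pmf (pairs n) False (\<lambda>(i,j). bernoulli_pmf (ep X i j)))"
  define Ev where "Ev = {z. (\<forall>y\<in>V. fst z y) \<and> (\<forall>p\<in>T. snd z p)}"
  define B where "B = {X :: nat \<Rightarrow> bool. \<forall>y\<in>V. X y}"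
  have fp: "finite (pairs n)" unfolding pairs_def by (rule finite_subset[of _ "{..<n} \<times> {..<n}"]) auto
  have inner: "measure_pmf.prob (map_pmf (\<lambda>E. (X, E)) (PE X)) Ev = indicator B X * a ^ card T" for X
  proof (cases "X \<in> B")
    case True
    hence "(\<lambda>E. (X, E)) -` Ev = {E. \<forall>p\<in>T. E p}" unfolding Ev_def B_def by auto
    hence "measure_pmf.prob (map_pmf (\<lambda>E. (X, E)) (PE X)) Ev = measure_pmf.prob (PE X) {E. \<forall>p\<in>T. E p}" by simp
    also have "\<dots> = (\<Prod>p\<in>T. pmf ((\<lambda>(i,j). bernoulli_pmf (ep X i j)) p) True)"
      unfolding PE_def by (rule prob_Pi_true[OF fp T])
    also have "\<dots> = (\<Prod>p\<in>T. a)"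
    proof (rule prod.cong[OF refl])
      fix p assume p: "p \<in> T"
      obtain i j where pij: "p = (i,j)" by (cases p)
      have "ep X i j = a" using TV[of i j] p pij True ep unfolding B_def by auto
      thus "pmf ((\<lambda>(i,j). bernoulli_pmf (ep X i j)) p) True = a" using pij a by simp
    qed
    finally show ?thesis using True by simp
  next
    case False
    hence "(\<lambda>E. (X, E)) -` Ev = {}" unfolding Ev_def B_def by auto
    thus ?thesis using False by simp
  qed
  have "measure_pmf.prob (bind_pmf PX (\<lambda>X. map_pmf (\<lambda>E. (X, E)) (PE X))) Ev
      = (\<integral>X. indicator B X * a ^ card T \<partial>PX)"
    unfolding measure_bind_pmf inner ..
  also have "\<dots> = measure_pmf.prob PX B * a ^ card T" by simp
  also have "measure_pmf.prob PX B = (\<Prod>y\<in>V. pmf (bernoulli_pmf q) True)"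
    unfolding PX_def B_def by (rule prob_Pi_true[OF _ V]) simp
  also have "\<dots> = q ^ card V" using q by simp
  finally show ?thesis unfolding PX_def PE_def Ev_def .
qed



locale blocks =
  fixes n v m e :: nat and TH :: "(nat \<times> nat) set"
  assumes m1: "1 \<le> m" and vmn: "v * m \<le> n" and bal: "balanced TH v e"
begin

definition blk :: "nat \<Rightarrow> nat set" where "blk i = {i * m ..< i * m + m}"
definition Phi where "Phi = PiE {..<v} blk"
definition Vs where "Vs \<phi> = \<phi> ` {..<v}"
definition Es where "Es \<phi> = (\<lambda>(x,y). (\<phi> x, \<phi> y)) ` TH"

lemma TH_sub: "TH \<subseteq> {(x,y). x < y \<and> y < v}" and card_TH: "card TH = e"
  and TH_bal: "U \<subseteq> {..<v} \<Longrightarrow> card {p \<in> TH. fst p \<in> U \<and> snd p \<in> U} * v \<le> e * card U"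
  using bal unfolding balanced_def by auto

lemma fin_TH: "finite TH"
  by (rule finite_subset[OF TH_sub]) (rule finite_subset[of _ "{..<v} \<times> {..<v}"], auto)

lemma phi_bounds: "\<phi> \<in> Phi \<Longrightarrow> i < v \<Longrightarrow> i * m \<le> \<phi> i \<and> \<phi> i < i * m + m"
  using PiE_mem[of \<phi> "{..<v}" blk i] unfolding Phi_def blk_def by auto

lemma phi_div: "\<phi> \<in> Phi \<Longrightarrow> i < v \<Longrightarrow> \<phi> i div m = i"
  by (rule div_nat_eqI) (use phi_bounds[of \<phi> i] in \<open>auto simp: algebra_simps\<close>)


lemma phi_lt_n: "\<phi> \<in> Phi \<Longrightarrow> i < v \<Longrightarrow> \<phi> i < n"
proof -
  assume a: "\<phi> \<in> Phi" "i < v"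
  have "\<phi> i < i * m + m" using phi_bounds[OF a] by simp
  also have "\<dots> = Suc i * m" by simp
  also have "\<dots> \<le> v * m" using a(2) by (intro mult_le_mono1) simp
  finally show ?thesis using vmn by simp
qed

lemma phi_mono: "\<phi> \<in> Phi \<Longrightarrow> x < y \<Longrightarrow> y < v \<Longrightarrow> \<phi> x < \<phi> y"
proof -
  assume a: "\<phi> \<in> Phi" "x < y" "y < v"
  have "\<phi> x < x * m + m" using phi_bounds[OF a(1)] a by simp
  also have "\<dots> = Suc x * m" by simp
  also have "\<dots> \<le> y * m" using a(2) by (intro mult_le_mono1) simp
  also have "\<dots> \<le> \<phi> y" using phi_bounds[OF a(1) a(3)] by simp
  finally show ?thesis .
qed

lemma phi_eq_iff: "\<phi> \<in> Phi \<Longrightarrow> \<psi> \<in> Phi \<Longrightarrow> i < v \<Longrightarrow> j < v \<Longrightarrow> \<phi> i = \<psi> j \<Longrightarrow> i = j"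
proof -
  assume a: "\<phi> \<in> Phi" "\<psi> \<in> Phi" "i < v" "j < v" "\<phi> i = \<psi> j"
  have "i = \<phi> i div m" using phi_div[OF a(1) a(3)] by simp
  also have "\<dots> = \<psi> j div m" using a by simp
  also have "\<dots> = j" using phi_div[OF a(2) a(4)] by simp
  finally show ?thesis .
qed

lemma phi_inj: "\<phi> \<in> Phi \<Longrightarrow> inj_on \<phi> {..<v}"
  unfolding inj_on_def using phi_eq_iff by blast

lemma card_Vs: "\<phi> \<in> Phi \<Longrightarrow> card (Vs \<phi>) = v"
  unfolding Vs_def using card_image[OF phi_inj] by simp

lemma Vs_sub: "\<phi> \<in> Phi \<Longrightarrow> Vs \<phi> \<subseteq> {..<n}"
  unfolding Vs_def using phi_lt_n by auto

lemma Es_sub: "\<phi> \<in> Phi \<Longrightarrow> Es \<phi> \<subseteq> pairs n"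
proof
  fix q assume a: "\<phi> \<in> Phi" "q \<in> Es \<phi>"
  then obtain x y where xy: "(x,y) \<in> TH" "q = (\<phi> x, \<phi> y)" unfolding Es_def by auto
  have "x < y" "y < v" using xy TH_sub by auto
  thus "q \<in> pairs n" using phi_mono[OF a(1)] phi_lt_n[OF a(1)] xy unfolding pairs_def by auto
qed

lemma Es_V: "\<phi> \<in> Phi \<Longrightarrow> (i,j) \<in> Es \<phi> \<Longrightarrow> i \<in> Vs \<phi> \<and> j \<in> Vs \<phi>"
  unfolding Es_def Vs_def using TH_sub by auto

lemma Es_inj: "\<phi> \<in> Phi \<Longrightarrow> inj_on (\<lambda>(x,y). (\<phi> x, \<phi> y)) TH"
proof (rule inj_onI)
  fix p p' assume a: "\<phi> \<in> Phi" "p \<in> TH" "p' \<in> TH" "(\<lambda>(x,y). (\<phi> x, \<phi> y)) p = (\<lambda>(x,y). (\<phi> x, \<phi> y)) p'"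
  obtain x y x' y' where p: "p = (x,y)" "p' = (x',y')" by (cases p, cases p')
  have "x < v" "y < v" "x' < v" "y' < v" using a p TH_sub by auto
  thus "p = p'" using a p phi_eq_iff[OF a(1) a(1)] by auto
qed

lemma card_Es: "\<phi> \<in> Phi \<Longrightarrow> card (Es \<phi>) = e"
  unfolding Es_def using card_image[OF Es_inj] card_TH by simp

definition agree where "agree \<phi> \<psi> = {i. i < v \<and> \<phi> i = \<psi> i}"

lemma Vs_Int: "\<phi> \<in> Phi \<Longrightarrow> \<psi> \<in> Phi \<Longrightarrow> Vs \<phi> \<inter> Vs \<psi> = \<phi> ` agree \<phi> \<psi>"
proof (intro equalityI subsetI)
  fix y assume a: "\<phi> \<in> Phi" "\<psi> \<in> Phi" "y \<in> Vs \<phi> \<inter> Vs \<psi>"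
  then obtain i j where ij: "i < v" "j < v" "y = \<phi> i" "y = \<psi> j" unfolding Vs_def by auto
  hence "i = j" using phi_eq_iff[OF a(1,2)] by auto
    thus "y \<in> \<phi> ` agree \<phi> \<psi>" using ij unfolding agree_def by (intro image_eqI[of _ _ i]) auto
next
  fix y assume "y \<in> \<phi> ` agree \<phi> \<psi>"
  thus "y \<in> Vs \<phi> \<inter> Vs \<psi>" unfolding Vs_def agree_def by force
qed

lemma card_Vs_Un: "\<phi> \<in> Phi \<Longrightarrow> \<psi> \<in> Phi \<Longrightarrow> card (Vs \<phi> \<union> Vs \<psi>) = 2 * v - card (agree \<phi> \<psi>)"
proof -
  assume a: "\<phi> \<in> Phi" "\<psi> \<in> Phi"
  have fin: "finite (Vs \<phi>)" "finite (Vs \<psi>)" unfolding Vs_def by auto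
  have "card (Vs \<phi> \<inter> Vs \<psi>) = card (agree \<phi> \<psi>)"
    unfolding Vs_Int[OF a] by (rule card_image, rule inj_on_subset[OF phi_inj[OF a(1)]]) (auto simp: agree_def)
  thus ?thesis using card_Un_Int[OF fin] card_Vs a by simp
qed

lemma Es_Int: "\<phi> \<in> Phi \<Longrightarrow> \<psi> \<in> Phi \<Longrightarrow>
   Es \<phi> \<inter> Es \<psi> \<subseteq> (\<lambda>(x,y). (\<phi> x, \<phi> y)) ` {p \<in> TH. fst p \<in> agree \<phi> \<psi> \<and> snd p \<in> agree \<phi> \<psi>}"
proof
  fix q assume a: "\<phi> \<in> Phi" "\<psi> \<in> Phi" and q: "q \<in> Es \<phi> \<inter> Es \<psi>"
  then obtain x y x' y' where xy: "(x,y) \<in> TH" "(x',y') \<in> TH" "q = (\<phi> x, \<phi> y)" "q = (\<psi> x', \<psi> y')"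
    unfolding Es_def by auto
  have b: "x < v" "y < v" "x' < v" "y' < v" using xy TH_sub by auto
  have "x = x'" "y = y'" using phi_eq_iff[OF a] b xy by auto
  hence "x \<in> agree \<phi> \<psi>" "y \<in> agree \<phi> \<psi>" using xy b unfolding agree_def by auto
  thus "q \<in> (\<lambda>(x,y). (\<phi> x, \<phi> y)) ` {p \<in> TH. fst p \<in> agree \<phi> \<psi> \<and> snd p \<in> agree \<phi> \<psi>}"
    using xy by force
qed

lemma card_Es_Int: "\<phi> \<in> Phi \<Longrightarrow> \<psi> \<in> Phi \<Longrightarrow> card (Es \<phi> \<inter> Es \<psi>) * v \<le> e * card (agree \<phi> \<psi>)"
proof -
  assume a: "\<phi> \<in> Phi" "\<psi> \<in> Phi"
  have f: "finite {p \<in> TH. fst p \<in> agree \<phi> \<psi> \<and> snd p \<in> agree \<phi> \<psi>}" using fin_TH by simp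
  have "card (Es \<phi> \<inter> Es \<psi>) \<le> card {p \<in> TH. fst p \<in> agree \<phi> \<psi> \<and> snd p \<in> agree \<phi> \<psi>}"
    using card_mono[OF finite_imageI[OF f] Es_Int[OF a]] card_image_le[OF f, of "\<lambda>(x,y). (\<phi> x, \<phi> y)"] by linarith
  hence "card (Es \<phi> \<inter> Es \<psi>) * v \<le> card {p \<in> TH. fst p \<in> agree \<phi> \<psi> \<and> snd p \<in> agree \<phi> \<psi>} * v" by simp
  also have "\<dots> \<le> e * card (agree \<phi> \<psi>)" by (rule TH_bal) (auto simp: agree_def)
  finally show ?thesis .
qed

lemma card_Es_Un: "\<phi> \<in> Phi \<Longrightarrow> \<psi> \<in> Phi \<Longrightarrow> card (Es \<phi> \<union> Es \<psi>) = 2 * e - card (Es \<phi> \<inter> Es \<psi>)"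
proof -
  assume a: "\<phi> \<in> Phi" "\<psi> \<in> Phi"
  have fin: "finite (Es \<phi>)" "finite (Es \<psi>)" unfolding Es_def using fin_TH by auto
  thus ?thesis using card_Un_Int[OF fin] card_Es a by simp
qed

lemma card_Phi: "card Phi = m ^ v"
  unfolding Phi_def blk_def by (simp add: card_PiE)

end

locale blocks_prob = blocks +
  fixes q a :: real and ep :: "(nat \<Rightarrow> bool) \<Rightarrow> nat \<Rightarrow> nat \<Rightarrow> real"
  assumes q: "0 < q" "q \<le> 1" and a: "0 < a" "a \<le> 1" and v0: "0 < v"
    and ep: "\<And>X i j. X i \<Longrightarrow> X j \<Longrightarrow> ep X i j = a"
begin

definition J where "J = bind_pmf (Pi_pmf {..<n} False (\<lambda>_. bernoulli_pmf q))
         (\<lambda>X. map_pmf (\<lambda>E. (X, E)) (Pi_pmf (pairs n) False (\<lambda>(i,j). bernoulli_pmf (ep X i j))))"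

definition A where "A \<phi> = {z. (\<forall>y\<in>Vs \<phi>. fst z y) \<and> (\<forall>p\<in>Es \<phi>. snd z p)}"

lemma prob_AA:
  assumes "\<phi> \<in> Phi" "\<psi> \<in> Phi"
  shows "measure_pmf.prob J (A \<phi> \<inter> A \<psi>) = q ^ card (Vs \<phi> \<union> Vs \<psi>) * a ^ card (Es \<phi> \<union> Es \<psi>)"
proof -
  have "A \<phi> \<inter> A \<psi> = {z. (\<forall>y\<in>Vs \<phi> \<union> Vs \<psi>. fst z y) \<and> (\<forall>p\<in>Es \<phi> \<union> Es \<psi>. snd z p)}"
    unfolding A_def by auto
  moreover have "measure_pmf.prob J {z. (\<forall>y\<in>Vs \<phi> \<union> Vs \<psi>. fst z y) \<and> (\<forall>p\<in>Es \<phi> \<union> Es \<psi>. snd z p)}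
     = q ^ card (Vs \<phi> \<union> Vs \<psi>) * a ^ card (Es \<phi> \<union> Es \<psi>)"
    unfolding J_def
  proof (rule joint_prob)
    show "Vs \<phi> \<union> Vs \<psi> \<subseteq> {..<n}" using Vs_sub assms by auto
    show "Es \<phi> \<union> Es \<psi> \<subseteq> pairs n" using Es_sub assms by auto
    show "\<And>i j. (i, j) \<in> Es \<phi> \<union> Es \<psi> \<Longrightarrow> i \<in> Vs \<phi> \<union> Vs \<psi> \<and> j \<in> Vs \<phi> \<union> Vs \<psi>"
      using Es_V assms by blast
  qed (use ep a q in auto)
  ultimately show ?thesis by simp
qed

lemma prob_A:
  assumes "\<phi> \<in> Phi"
  shows "measure_pmf.prob J (A \<phi>) = q ^ v * a ^ e"
  using prob_AA[OF assms assms] card_Vs[OF assms] card_Es[OF assms] by simp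

definition x where "x = (1 / q) * a powr (- (real e / real v))"

lemma x_ge1: "1 \<le> x"
proof -
  have "1 \<le> 1 / q" using q by simp
  moreover have "1 \<le> a powr (- (real e / real v))"
    using a powr_mono'[of 0 "real e / real v" a] by (simp add: powr_minus_divide)
  ultimately show ?thesis unfolding x_def by (metis mult_le_cancel_left1 order_trans less_le_not_le one_le_mult_iff zero_less_one)
qed

lemma prob_AA_bound:
  assumes "\<phi> \<in> Phi" "\<psi> \<in> Phi"
  shows "measure_pmf.prob J (A \<phi> \<inter> A \<psi>) \<le> (q ^ v * a ^ e)^2 * x ^ card (agree \<phi> \<psi>)"
proof -
  define t where "t = card (agree \<phi> \<psi>)"
  define j where "j = card (Es \<phi> \<inter> Es \<psi>)"
  have tv: "t \<le> v"
  proof -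
    have "agree \<phi> \<psi> \<subseteq> {..<v}" unfolding agree_def by auto
    thus ?thesis unfolding t_def using card_mono[of "{..<v}"] by fastforce
  qed
  have jv: "real j \<le> real e * real t / real v"
    using card_Es_Int[OF assms] v0 unfolding j_def t_def
    by (simp add: field_simps) (metis of_nat_le_iff of_nat_mult)
  have je: "j \<le> e"
  proof -
    have "finite (Es \<phi>)" unfolding Es_def using fin_TH by simp
    hence "j \<le> card (Es \<phi>)" unfolding j_def by (simp add: card_mono)
    thus ?thesis using card_Es assms by simp
  qed
  have "measure_pmf.prob J (A \<phi> \<inter> A \<psi>) = q ^ (2 * v - t) * a ^ (2 * e - j)"
    using prob_AA[OF assms] card_Vs_Un[OF assms] card_Es_Un[OF assms] unfolding t_def j_def by simp
  also have "q ^ (2 * v - t) = q ^ (2 * v) * (1 / q) ^ t"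
    using tv q by (simp add: power_diff power_one_over field_simps)
  also have "a ^ (2 * e - j) = a ^ (2 * e) * (1 / a ^ j)"
    using je a by (simp add: power_diff field_simps)
  also have "1 / a ^ j \<le> (a powr (- (real e / real v))) ^ t"
  proof -
    have "a powr (real e * real t / real v) \<le> a powr (real j)"
      by (rule powr_mono') (use jv a in auto)
    hence "a powr (real e * real t / real v) \<le> a ^ j" using a by (simp add: powr_realpow)
    hence "1 / a ^ j \<le> 1 / a powr (real e * real t / real v)"
      using a by (intro divide_left_mono) auto
    also have "\<dots> = (a powr (- (real e / real v))) ^ t"
      using a by (simp add: powr_minus_divide powr_realpow[symmetric] powr_powr field_simps)
    finally show ?thesis .
  qed
  hence "q ^ (2 * v) * (1 / q) ^ t * (a ^ (2 * e) * (1 / a ^ j))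
      \<le> q ^ (2 * v) * (1 / q) ^ t * (a ^ (2 * e) * (a powr (- (real e / real v))) ^ t)"
    using q a by (intro mult_left_mono) auto
  also have "\<dots> = (q ^ v * a ^ e)^2 * x ^ t"
  proof -
    have "x ^ t = (1 / q) ^ t * (a powr (- (real e / real v))) ^ t" unfolding x_def by (simp only: power_mult_distrib)
    moreover have "(q ^ v * a ^ e)^2 = q ^ (2 * v) * a ^ (2 * e)"
      by (simp add: power_mult_distrib power_mult[symmetric] mult.commute)
    ultimately show ?thesis by (simp add: algebra_simps)
  qed
  finally show ?thesis unfolding t_def .
qed

end

context blocks_prob begin

lemma sum_x_agree:
  assumes phi: "\<phi> \<in> Phi"
  shows "(\<Sum>\<psi>\<in>Phi. x ^ card (agree \<phi> \<psi>)) = (x + real m - 1) ^ v"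
proof -
  have "(\<Sum>\<psi>\<in>Phi. x ^ card (agree \<phi> \<psi>)) = (\<Sum>\<psi>\<in>Phi. \<Prod>i\<in>{..<v}. (if \<phi> i = \<psi> i then x else 1))"
  proof (rule sum.cong[OF refl])
    fix \<psi> show "x ^ card (agree \<phi> \<psi>) = (\<Prod>i\<in>{..<v}. (if \<phi> i = \<psi> i then x else 1))"
      by (simp add: prod.If_cases agree_def Int_def)
  qed
  also have "\<dots> = (\<Prod>i\<in>{..<v}. \<Sum>y\<in>blk i. (if \<phi> i = y then x else 1))"
    unfolding Phi_def by (rule prod_sum_PiE[symmetric]) (auto simp: blk_def)
  also have "\<dots> = (\<Prod>i\<in>{..<v}. x + real m - 1)"
  proof (rule prod.cong[OF refl])
    fix i assume i: "i \<in> {..<v}"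
    have pi: "\<phi> i \<in> blk i" using phi i unfolding Phi_def by auto
    have fb: "finite (blk i)" unfolding blk_def by simp
    have cb: "card (blk i) = m" unfolding blk_def by simp
    have "(\<Sum>y\<in>blk i. (if \<phi> i = y then x else 1)) = (if \<phi> i = \<phi> i then x else 1) + (\<Sum>y\<in>blk i - {\<phi> i}. (if \<phi> i = y then x else 1))"
      by (rule sum.remove[OF fb pi])
    hence "(\<Sum>y\<in>blk i. (if \<phi> i = y then x else 1)) = x + (\<Sum>y\<in>blk i - {\<phi> i}. (if \<phi> i = y then x else 1))"
      by (simp only: refl if_True)
    also have "(\<Sum>y\<in>blk i - {\<phi> i}. (if \<phi> i = y then x else 1)) = (\<Sum>y\<in>blk i - {\<phi> i}. 1)"
      by (rule sum.cong) auto
    also have "\<dots> = real m - 1" using pi fb cb m1 by (simp add: of_nat_diff)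
    finally show "(\<Sum>y\<in>blk i. (if \<phi> i = y then x else 1)) = x + real m - 1" by simp
  qed
  also have "\<dots> = (x + real m - 1) ^ v" by simp
  finally show ?thesis .
qed

lemma bad_bound:
  "measure_pmf.prob J {z. \<forall>\<phi>\<in>Phi. z \<notin> A \<phi>} \<le> ((x + real m - 1) / real m) ^ v - 1"
proof -
  define \<mu>0 where "\<mu>0 = q ^ v * a ^ e"
  have mu0: "\<mu>0 > 0" unfolding \<mu>0_def using q a by simp
  have fP: "finite Phi" unfolding Phi_def blk_def by (simp add: finite_PiE)
  define \<mu> where "\<mu> = (\<Sum>\<phi>\<in>Phi. measure_pmf.prob J (A \<phi>))"
  have mu: "\<mu> = real m ^ v * \<mu>0" unfolding \<mu>_def \<mu>0_def using prob_A card_Phi by simp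
  have mpos: "\<mu> > 0" unfolding mu using mu0 m1 by simp
  have "measure_pmf.prob J {z. \<forall>\<phi>\<in>Phi. z \<notin> A \<phi>} \<le> (\<Sum>\<phi>\<in>Phi. \<Sum>\<psi>\<in>Phi. measure_pmf.prob J (A \<phi> \<inter> A \<psi>)) / \<mu>^2 - 1"
    by (rule second_moment[OF fP \<mu>_def mpos])
  also have "(\<Sum>\<phi>\<in>Phi. \<Sum>\<psi>\<in>Phi. measure_pmf.prob J (A \<phi> \<inter> A \<psi>)) \<le> (\<Sum>\<phi>\<in>Phi. \<Sum>\<psi>\<in>Phi. \<mu>0^2 * x ^ card (agree \<phi> \<psi>))"
    by (intro sum_mono) (use prob_AA_bound \<mu>0_def in auto)
  also have "\<dots> = (\<Sum>\<phi>\<in>Phi. \<mu>0^2 * (x + real m - 1) ^ v)"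
    by (rule sum.cong[OF refl]) (simp add: sum_distrib_left[symmetric] sum_x_agree)
  also have "\<dots> = real m ^ v * \<mu>0^2 * (x + real m - 1) ^ v" using card_Phi by simp
  finally have "measure_pmf.prob J {z. \<forall>\<phi>\<in>Phi. z \<notin> A \<phi>} \<le> real m ^ v * \<mu>0^2 * (x + real m - 1) ^ v / \<mu>^2 - 1"
    using mpos by (simp add: divide_right_mono)
  also have "real m ^ v * \<mu>0^2 * (x + real m - 1) ^ v / \<mu>^2 = ((x + real m - 1) / real m) ^ v"
    unfolding mu using mu0 m1 by (simp add: power_divide power2_eq_square field_simps)
  finally show ?thesis .
qed

end

context blocks_prob begin

lemma rej_of_A:
  assumes phi: "\<phi> \<in> Phi" and z: "z \<in> A \<phi>"
  shows "est_rejects n v e (adj (snd z))"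
  unfolding est_rejects_iff
proof (intro exI conjI)
  show "Vs \<phi> \<subseteq> {..<n}" by (rule Vs_sub[OF phi])
  show "card (Vs \<phi>) \<le> v" using card_Vs[OF phi] by simp
  have "Es \<phi> \<subseteq> TS (Vs \<phi>) (snd z)"
  proof
    fix p assume p: "p \<in> Es \<phi>"
    obtain i j where pij: "p = (i,j)" by (cases p)
    have "i < j" using Es_sub[OF phi] p pij unfolding pairs_def by auto
    moreover have "i \<in> Vs \<phi>" "j \<in> Vs \<phi>" using Es_V[OF phi] p pij by auto
    moreover have "snd z p" using z p unfolding A_def by auto
    ultimately show "p \<in> TS (Vs \<phi>) (snd z)" unfolding TS_def pij by auto
  qed
  moreover have "finite (TS (Vs \<phi>) (snd z))" by (rule finite_TS) (simp add: Vs_def)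
  ultimately have "card (Es \<phi>) \<le> card (TS (Vs \<phi>) (snd z))" by (rule card_mono[rotated])
  thus "e \<le> card (TS (Vs \<phi>) (snd z))" using card_Es[OF phi] by simp
qed

lemma typeII_core:
  "measure_pmf.prob (map_pmf snd J) {E. \<not> est_rejects n v e (adj E)} \<le> ((x + real m - 1) / real m) ^ v - 1"
proof -
  have "measure_pmf.prob (map_pmf snd J) {E. \<not> est_rejects n v e (adj E)}
      = measure_pmf.prob J (snd -` {E. \<not> est_rejects n v e (adj E)})" by simp
  also have "\<dots> \<le> measure_pmf.prob J {z. \<forall>\<phi>\<in>Phi. z \<notin> A \<phi>}"
    by (rule measure_pmf.finite_measure_mono) (use rej_of_A in auto)
  also have "\<dots> \<le> ((x + real m - 1) / real m) ^ v - 1" by (rule bad_bound)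
  finally show ?thesis .
qed

end



lemma alpha_alg:
  fixes n N a c :: real
  assumes n: "n > 0" and N: "0 \<le> N" "N \<le> n / 4" and a: "0 \<le> a" and c: "0 \<le> c"
  shows "a * (N / n) + ((c * (n - N) - a * N) / (n - 2 * N)) * (1 - N / n) \<le> 2 * c"
proof -
  define D where "D = n - 2 * N"
  have D: "D \<ge> n / 2" "D > 0" unfolding D_def using N n by auto
  have eq: "a * (N / n) + ((c * (n - N) - a * N) / (n - 2 * N)) * (1 - N / n) = (c * (n - N)^2 - a * N^2) / (n * D)"
    using D n unfolding D_def by (simp add: field_simps power2_eq_square)
  have "(c * (n - N)^2 - a * N^2) / (n * D) \<le> (c * n^2) / (n * (n / 2))"
  proof (rule frac_le)
    have "(n - N)^2 \<le> n^2" using N n by (intro power_mono) auto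
    hence "c * (n - N)^2 \<le> c * n^2" using c by (rule mult_left_mono)
    moreover have "0 \<le> a * N^2" using a by simp
    ultimately show "c * (n - N)^2 - a * N^2 \<le> c * n^2" by linarith
    show "0 \<le> c * n^2" using c by simp
    show "0 < n * (n / 2)" using n by simp
    show "n * (n / 2) \<le> n * D" using D n by simp
  qed
  also have "\<dots> = 2 * c" using n by (simp add: power2_eq_square field_simps)
  finally show ?thesis using eq by simp
qed

lemma lim_powr_neg: "s < 0 \<Longrightarrow> (\<lambda>n::nat. real n powr s) \<longlonglongrightarrow> 0"
  by (rule tendsto_neg_powr) (auto simp: filterlim_real_sequentially)

lemma typeI_concrete:
  assumes n: "1 \<le> n" and N: "Npar \<beta> n \<le> real n / 4"
  shows "typeI_err \<beta> \<omega> \<delta> v e n \<le> real ((v + 1) * n ^ v * 2 ^ (v * v)) * (2 * real n powr (- \<delta>)) ^ e"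
proof -
  have al: "alphapar \<beta> \<omega> \<delta> n \<le> 2 * cpar \<delta> n"
    unfolding alphapar_def bpar_def
    by (rule alpha_alg) (use n N in \<open>auto simp: Npar_def apar_def cpar_def\<close>)
  have "min 1 (max 0 (alphapar \<beta> \<omega> \<delta> n)) \<le> 2 * real n powr (- \<delta>)"
    using al powr_ge_zero[of "real n" "- \<delta>"] unfolding cpar_def by (auto simp: min_def max_def)
  hence "(min 1 (max 0 (alphapar \<beta> \<omega> \<delta> n))) ^ e \<le> (2 * real n powr (- \<delta>)) ^ e"
    by (intro power_mono) auto
  hence "real ((v + 1) * n ^ v * 2 ^ (v * v)) * (min 1 (max 0 (alphapar \<beta> \<omega> \<delta> n))) ^ e
        \<le> real ((v + 1) * n ^ v * 2 ^ (v * v)) * (2 * real n powr (- \<delta>)) ^ e"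
    by (intro mult_left_mono) auto
  with typeI_bound[OF n] show ?thesis by (rule order_trans)
qed

lemma typeII_concrete:
  assumes v0: "0 < v" and n: "2 * v \<le> n" and bal: "balanced TH v e" and \<beta>: "0 < \<beta>" and \<omega>: "0 < \<omega>"
  shows "typeII_err \<beta> \<omega> \<delta> v e n \<le>
     ((real n powr (\<beta> + \<omega> * real e / real v) + real (n div v) - 1) / real (n div v)) ^ v - 1"
proof -
  have "0 < n div v" using n v0 by (simp add: div_greater_zero_iff)
  hence m1: "1 \<le> n div v" by simp
  have npos: "real n > 0" using n v0 by simp
  interpret blocks_prob n v "n div v" e TH "real n powr (- \<beta>)" "real n powr (- \<omega>)" "edge_prob \<beta> \<omega> \<delta> n"
  proof (unfold_locales)
    show "1 \<le> n div v" by (rule m1)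
    show "v * (n div v) \<le> n" by simp
    show "balanced TH v e" by (rule bal)
    show "0 < real n powr - \<beta>" "0 < real n powr - \<omega>" using npos by auto
    have n1: "1 \<le> real n" using n v0 by simp
    show "real n powr - \<beta> \<le> 1" using ge_one_powr_ge_zero[OF n1, of \<beta>] \<beta> by (simp add: powr_minus_divide divide_le_eq_1, linarith)
    show "real n powr - \<omega> \<le> 1" using ge_one_powr_ge_zero[OF n1, of \<omega>] \<omega> by (simp add: powr_minus_divide divide_le_eq_1, linarith)
    show "0 < v" by (rule v0)
    show "\<And>X i j. X i \<Longrightarrow> X j \<Longrightarrow> edge_prob \<beta> \<omega> \<delta> n X i j = real n powr - \<omega>"
      unfolding edge_prob_def apar_def by simp
  qed
  have q: "Npar \<beta> n / real n = real n powr (- \<beta>)"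
    unfolding Npar_def using npos by (simp add: powr_diff powr_minus_divide)
  have alt: "alt_graph \<beta> \<omega> \<delta> n = map_pmf snd J"
    unfolding alt_graph_def J_def q by (simp add: map_bind_pmf map_pmf_comp)
  have xe: "x = real n powr (\<beta> + \<omega> * real e / real v)"
  proof -
    have "(real n powr - \<omega>) powr (- (real e / real v)) = real n powr (\<omega> * real e / real v)"
      by (simp add: powr_powr)
    moreover have "1 / real n powr - \<beta> = real n powr \<beta>" by (simp add: powr_minus divide_inverse)
    ultimately show ?thesis unfolding x_def by (simp add: powr_add)
  qed
  show ?thesis unfolding typeII_err_def alt using typeII_core xe by simp
qed

lemma lim_f1:
  assumes "real v - \<delta> * real e < 0"
  shows "(\<lambda>n. real ((v + 1) * n ^ v * 2 ^ (v * v)) * (2 * real n powr (- \<delta>)) ^ e) \<longlonglongrightarrow> 0"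
proof -
  define C where "C = real ((v + 1) * 2 ^ (v * v)) * 2 ^ e"
  have ev: "eventually (\<lambda>n. C * real n powr (real v - \<delta> * real e) =
      real ((v + 1) * n ^ v * 2 ^ (v * v)) * (2 * real n powr (- \<delta>)) ^ e) sequentially"
    using eventually_ge_at_top[of 1]
  proof eventually_elim
    case (elim n)
    hence np: "real n > 0" by simp
    have "real n powr (real v - \<delta> * real e) = real n ^ v * (real n powr (- \<delta>)) ^ e"
    proof -
      have a: "real n powr real v = real n ^ v" by (rule powr_realpow[OF np])
      have "(real n powr (-\<delta>)) ^ e = (real n powr (-\<delta>)) powr real e" using np by (simp add: powr_realpow)
      also have "\<dots> = real n powr (- \<delta> * real e)" by (simp add: powr_powr)
      finally have b: "(real n powr (-\<delta>)) ^ e = real n powr (- \<delta> * real e)" .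
      have "real n powr (real v - \<delta> * real e) = real n powr real v * real n powr (- \<delta> * real e)"
        by (simp add: powr_add[symmetric])
      thus ?thesis using a b by simp
    qed
    thus ?case unfolding C_def by (simp add: power_mult_distrib algebra_simps)
  qed
  have "(\<lambda>n. C * real n powr (real v - \<delta> * real e)) \<longlonglongrightarrow> C * 0"
    by (intro tendsto_mult tendsto_const lim_powr_neg assms)
  thus ?thesis using ev by (simp add: tendsto_cong)
qed

lemma lim_f2:
  assumes v0: "0 < v" and s0: "0 \<le> s" and s1: "s < 1"
  shows "(\<lambda>n. ((real n powr s + real (n div v) - 1) / real (n div v)) ^ v - 1) \<longlonglongrightarrow> 0"
proof -
  define y where "y = (\<lambda>n::nat. (real n powr s - 1) / real (n div v))"
  have y0: "y \<longlonglongrightarrow> 0"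
  proof (rule tendsto_sandwich[of "\<lambda>_. 0" _ _ "\<lambda>n. 2 * real v * real n powr (s - 1)"])
    show "eventually (\<lambda>n. 0 \<le> y n) sequentially"
      using eventually_ge_at_top[of 1]
    proof eventually_elim
      case (elim n)
      hence "1 \<le> real n powr s" using s0 by (intro ge_one_powr_ge_zero) auto
      thus ?case unfolding y_def by simp
    qed
    show "eventually (\<lambda>n. y n \<le> 2 * real v * real n powr (s - 1)) sequentially"
      using eventually_ge_at_top[of "2 * v"]
    proof eventually_elim
      case (elim n)
      have np: "real n > 0" using elim v0 by simp
      have vp: "real v > 0" using v0 by simp
      have "real (n div v) \<ge> real n / real v - 1"
      proof -
        have "real n = real v * real (n div v) + real (n mod v)"
          by (metis div_mult_mod_eq of_nat_add of_nat_mult mult.commute)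
        moreover have "real (n mod v) < real v" using v0 by simp
        ultimately show ?thesis using vp by (simp add: field_simps)
      qed
      moreover have "real n / real v - 1 \<ge> real n / (2 * real v)"
        using elim vp by (simp add: field_simps)
      ultimately have md: "real (n div v) \<ge> real n / (2 * real v)" by linarith
      have mpos: "real n / (2 * real v) > 0" using np vp by simp
      have "y n \<le> real n powr s / real (n div v)"
        unfolding y_def using mpos md by (intro divide_right_mono) auto
      also have "\<dots> \<le> real n powr s / (real n / (2 * real v))"
      proof (rule divide_left_mono)
        show "real n / (2 * real v) \<le> real (n div v)" by (rule md)
        show "0 \<le> real n powr s" by simp
        have "0 < real (n div v)" using mpos md by linarith
        thus "0 < real (n div v) * (real n / (2 * real v))" using mpos by (metis mult_pos_pos)
      qed
      also have "\<dots> = 2 * real v * real n powr (s - 1)"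
        using np vp by (simp add: powr_diff field_simps)
      finally show ?case .
    qed
    have "(\<lambda>n. 2 * real v * real n powr (s - 1)) \<longlonglongrightarrow> 2 * real v * 0"
      by (intro tendsto_mult tendsto_const lim_powr_neg) (use s1 in simp)
    thus "(\<lambda>n. 2 * real v * real n powr (s - 1)) \<longlonglongrightarrow> 0" by simp
  qed simp
  have "(\<lambda>n. (1 + y n) ^ v - 1) \<longlonglongrightarrow> (1 + 0) ^ v - 1"
    by (intro tendsto_diff tendsto_power tendsto_add tendsto_const y0)
  hence lim: "(\<lambda>n. (1 + y n) ^ v - 1) \<longlonglongrightarrow> 0" by simp
  have ev: "eventually (\<lambda>n. (1 + y n) ^ v - 1 = ((real n powr s + real (n div v) - 1) / real (n div v)) ^ v - 1) sequentially"
    using eventually_ge_at_top[of v]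
  proof eventually_elim
    case (elim n)
    hence "0 < n div v" using v0 by (simp add: div_greater_zero_iff)
    hence "real (n div v) > 0" by simp
    thus ?case unfolding y_def by (simp add: field_simps)
  qed
  show ?thesis by (rule Lim_transform_eventually[OF lim ev])
qed

theorem theorem7:
  fixes \<beta> \<omega> \<delta> :: real and v e :: nat
  assumes "1/2 \<le> \<beta>" and "\<beta> < 1"
    and "0 < \<omega>" and "\<omega> < \<delta>" and "\<delta> < 1"
    and "\<omega> / (1 - \<beta>) < \<delta>"
    and "0 < v" and "0 < e" and "e \<le> v * (v - 1) div 2"
    and "\<omega> / (1 - \<beta>) < real v / real e" and "real v / real e < \<delta>"
  shows "(\<lambda>n. typeI_err \<beta> \<omega> \<delta> v e n + typeII_err \<beta> \<omega> \<delta> v e n) \<longlonglongrightarrow> 0"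
proof -
  have ep: "real e > 0" "real v > 0" using assms by auto
  have vd: "real v < \<delta> * real e" using assms(11) ep by (simp add: divide_less_eq)
  have ve: "v < e"
  proof -
    have "\<delta> * real e < real e" using assms(5) ep by simp
    thus ?thesis using vd by linarith
  qed
  obtain TH where bal: "balanced TH v e" using balanced_exists[OF ve assms(9)] by blast
  define s where "s = \<beta> + \<omega> * real e / real v"
  have b1: "1 - \<beta> > 0" using assms(2) by simp
  have "\<omega> < real v / real e * (1 - \<beta>)" using assms(10) b1 by (simp add: divide_less_eq)
  hence "\<omega> * real e / real v < 1 - \<beta>" using ep by (simp add: field_simps)
  hence s1: "s < 1" unfolding s_def by simp
  have s0: "0 \<le> s" unfolding s_def using assms ep by simp
  have bpos: "0 < \<beta>" using assms(1) by simp
  define f1 where "f1 = (\<lambda>n. real ((v + 1) * n ^ v * 2 ^ (v * v)) * (2 * real n powr (- \<delta>)) ^ e)"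
  define f2 where "f2 = (\<lambda>n. ((real n powr s + real (n div v) - 1) / real (n div v)) ^ v - 1)"
  have lim: "(\<lambda>n. f1 n + f2 n) \<longlonglongrightarrow> 0 + 0"
    unfolding f1_def f2_def by (intro tendsto_add lim_f1 lim_f2) (use vd s0 s1 assms(7) in auto)
  have Nq: "eventually (\<lambda>n. Npar \<beta> n \<le> real n / 4) sequentially"
  proof -
    have "(\<lambda>n. real n powr (- \<beta>)) \<longlonglongrightarrow> 0" by (rule lim_powr_neg) (use bpos in simp)
    hence "eventually (\<lambda>n. real n powr (- \<beta>) < 1/4) sequentially"
      by (rule order_tendstoD) simp
    thus ?thesis using eventually_ge_at_top[of 1]
    proof eventually_elim
      case (elim n)
      hence np: "real n > 0" by simp
      have "Npar \<beta> n = real n * real n powr (- \<beta>)"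
        unfolding Npar_def using np by (simp add: powr_diff powr_minus divide_inverse)
      thus ?case using elim np by simp
    qed
  qed
  have upper: "eventually (\<lambda>n. typeI_err \<beta> \<omega> \<delta> v e n + typeII_err \<beta> \<omega> \<delta> v e n \<le> f1 n + f2 n) sequentially"
    using Nq eventually_ge_at_top[of "2 * v"] eventually_ge_at_top[of 1]
  proof eventually_elim
    case (elim n)
    have "typeI_err \<beta> \<omega> \<delta> v e n \<le> f1 n" unfolding f1_def by (rule typeI_concrete) (use elim in auto)
    moreover have "typeII_err \<beta> \<omega> \<delta> v e n \<le> f2 n" unfolding f2_def s_def
      by (rule typeII_concrete[OF assms(7) _ bal bpos assms(3)]) (use elim in auto)
    ultimately show ?case by simp
  qed
  have lower: "eventually (\<lambda>n. 0 \<le> typeI_err \<beta> \<omega> \<delta> v e n + typeII_err \<beta> \<omega> \<delta> v e n) sequentially"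
    by (simp add: typeI_err_def typeII_err_def)
  show ?thesis using tendsto_sandwich[OF lower upper tendsto_const] lim by simp
qed


end
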